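(* Let $\lambda\in K$ and $S=\{D(xy)-D(x)y-xD(y)-\lambda D(x)D(y)\mid x,y\in\mathfrak{S}(X)\}\subseteq K\langle X;D\rangle$. Then $K\langle X;D|S\rangle=K\langle X;D\rangle/Id(S)$ is a free $\lambda$-differential algebra on the set $X$, with $K$-basis $S(D^\omega(X))$.
   Context: $K$ is a commutative ring with unit. A $\lambda$-differential algebra is an associative $K$-algebra $R$ with a $K$-linear $D:R\to R$ satisfying $D(xy)=D(x)y+xD(y)+\lambda D(x)D(y)$ for all $x,y\in R$; free on $X$ means every map from $X$ to such an algebra extends uniquely to a homomorphism commuting with $D$. $S(Y)$ is the free semigroup on $Y$; $\mathfrak{S}_0=S(X)$, $\mathfrak{S}_n=S(X\cup\{D(u)\mid u\in\mathfrak{S}_{n-1}\})$, $\mathfrak{S}(X)=\bigcup_n\mathfrak{S}_n$; $K\langle X;D\rangle$ is the free $K$-module on $\mathfrak{S}(X)$ with concatenation product and $D$ extended linearly. $Id(S)$ is the $K$-span of all $u|_s$, $u$ a word on $X\cup\{\star\}$ (with $D$) containing exactly one $\star$, $u|_s$ the substitution of $s\in S$ for $\star$. $D^\omega(X)=\{D^i(x)\mid i\ge0,x\in X\}$, $D^0(x)=x$. *)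

theory Defs
  imports "HOL-Library.Poly_Mapping"
begin

text \<open>A letter is either a variable or D applied to a word; a word is a list of
letters. Well-formedness w.r.t. a set X: variables lie in X and all words
(including those inside D) are nonempty, i.e. elements of the free semigroup.\<close>

datatype 'x letter = V 'x | Dl "'x letter list"

fun wfl :: "'x set \<Rightarrow> 'x letter \<Rightarrow> bool" where
  "wfl X (V x) = (x \<in> X)"
| "wfl X (Dl w) = (w \<noteq> [] \<and> (\<forall>l\<in>set w. wfl X l))"

definition opwords :: "'x set \<Rightarrow> 'x letter list set" where
  "opwords X = {w. w \<noteq> [] \<and> (\<forall>l\<in>set w. wfl X l)}"

type_synonym ('x, 'k) opoly = "'x letter list \<Rightarrow>\<^sub>0 'k"

definition KXD :: "'x set \<Rightarrow> ('x, 'k::comm_ring_1) opoly set" where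
  "KXD X = {p. Poly_Mapping.keys p \<subseteq> opwords X}"

definition wd :: "'x letter list \<Rightarrow> ('x, 'k::comm_ring_1) opoly" where
  "wd u = Poly_Mapping.single u 1"

definition smult :: "'k::comm_ring_1 \<Rightarrow> ('x, 'k) opoly \<Rightarrow> ('x, 'k) opoly" where
  "smult c p = Poly_Mapping.map (\<lambda>a. c * a) p"

definition pmul :: "('x, 'k::comm_ring_1) opoly \<Rightarrow> ('x, 'k) opoly \<Rightarrow> ('x, 'k) opoly" where
  "pmul p q = (\<Sum>(u, v)\<in>Poly_Mapping.keys p \<times> Poly_Mapping.keys q.
                 Poly_Mapping.single (u @ v) (Poly_Mapping.lookup p u * Poly_Mapping.lookup q v))"

definition pD :: "('x, 'k::comm_ring_1) opoly \<Rightarrow> ('x, 'k) opoly" where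
  "pD p = (\<Sum>u\<in>Poly_Mapping.keys p. Poly_Mapping.single [Dl u] (Poly_Mapping.lookup p u))"

definition Sset :: "'x set \<Rightarrow> 'k::comm_ring_1 \<Rightarrow> ('x, 'k) opoly set" where
  "Sset X lam = {pD (pmul (wd x) (wd y)) - pmul (pD (wd x)) (wd y) - pmul (wd x) (pD (wd y))
                   - smult lam (pmul (pD (wd x)) (pD (wd y))) | x y. x \<in> opwords X \<and> y \<in> opwords X}"

text \<open>Star words: operated words over the alphabet X \<union> {star}, encoded as
letters over 'x option with None = star.\<close>

fun nstar_l :: "'x option letter \<Rightarrow> nat" and nstar_w :: "'x option letter list \<Rightarrow> nat" where
  "nstar_l (V None) = 1"
| "nstar_l (V (Some x)) = 0"
| "nstar_l (Dl w) = nstar_w w"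
| "nstar_w [] = 0"
| "nstar_w (l # ls) = nstar_l l + nstar_w ls"

fun subst_l :: "'x option letter \<Rightarrow> ('x, 'k::comm_ring_1) opoly \<Rightarrow> ('x, 'k) opoly"
and subst_w :: "'x option letter list \<Rightarrow> ('x, 'k::comm_ring_1) opoly \<Rightarrow> ('x, 'k) opoly" where
  "subst_l (V None) s = s"
| "subst_l (V (Some x)) s = wd [V x]"
| "subst_l (Dl w) s = pD (subst_w w s)"
| "subst_w [] s = 0"
| "subst_w [l] s = subst_l l s"
| "subst_w (l # l' # ls) s = pmul (subst_l l s) (subst_w (l' # ls) s)"

definition star_words :: "'x set \<Rightarrow> 'x option letter list set" where
  "star_words X = {u. u \<in> opwords (insert None (Some ` X)) \<and> nstar_w u = 1}"

inductive_set IdS :: "'x set \<Rightarrow> ('x, 'k::comm_ring_1) opoly set \<Rightarrow> ('x, 'k) opoly set"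
  for X :: "'x set" and S :: "('x, 'k) opoly set" where
  gen: "u \<in> star_words X \<Longrightarrow> s \<in> S \<Longrightarrow> subst_w u s \<in> IdS X S"
| zero: "0 \<in> IdS X S"
| add: "a \<in> IdS X S \<Longrightarrow> b \<in> IdS X S \<Longrightarrow> a + b \<in> IdS X S"
| scal: "a \<in> IdS X S \<Longrightarrow> smult c a \<in> IdS X S"

fun Dpow :: "nat \<Rightarrow> 'x \<Rightarrow> 'x letter" where
  "Dpow 0 x = V x"
| "Dpow (Suc i) x = Dl [Dpow i x]"

definition basis_words :: "'x set \<Rightarrow> 'x letter list set" where
  "basis_words X = {w. w \<noteq> [] \<and> (\<forall>l\<in>set w. \<exists>i. \<exists>x\<in>X. l = Dpow i x)}"

text \<open>A (not necessarily unital) associative K-algebra is modelled by a type of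
class ring (nonunital associative ring) with a scalar action sc; D is K-linear
and satisfies the lambda-Leibniz rule.\<close>

definition lambda_diff_alg ::
  "('k::comm_ring_1 \<Rightarrow> 'r::ring \<Rightarrow> 'r) \<Rightarrow> ('r \<Rightarrow> 'r) \<Rightarrow> 'k \<Rightarrow> bool" where
  "lambda_diff_alg sc Dr lam \<longleftrightarrow>
     (\<forall>a x y. sc a (x + y) = sc a x + sc a y) \<and>
     (\<forall>a b x. sc (a + b) x = sc a x + sc b x) \<and>
     (\<forall>a b x. sc (a * b) x = sc a (sc b x)) \<and>
     (\<forall>x. sc 1 x = x) \<and>
     (\<forall>a x y. sc a (x * y) = sc a x * y \<and> sc a (x * y) = x * sc a y) \<and>
     (\<forall>x y. Dr (x + y) = Dr x + Dr y) \<and>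
     (\<forall>a x. Dr (sc a x) = sc a (Dr x)) \<and>
     (\<forall>x y. Dr (x * y) = Dr x * y + x * Dr y + sc lam (Dr x * Dr y))"

text \<open>K<X;D|S> = K<X;D>/Id(S) is a lambda-differential algebra: Id(S) lies in
K<X;D>, is a two-sided ideal closed under D (so product and D descend to the
quotient), and the lambda-Leibniz rule holds modulo Id(S).\<close>

definition quotient_is_lambda_diff :: "'x set \<Rightarrow> 'k::comm_ring_1 \<Rightarrow> ('x, 'k) opoly set \<Rightarrow> bool" where
  "quotient_is_lambda_diff X lam I \<longleftrightarrow>
     I \<subseteq> KXD X \<and>
     (\<forall>a\<in>I. \<forall>p\<in>KXD X. pmul p a \<in> I \<and> pmul a p \<in> I) \<and>
     (\<forall>a\<in>I. pD a \<in> I) \<and>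
     (\<forall>p\<in>KXD X. \<forall>q\<in>KXD X.
        pD (pmul p q) - pmul (pD p) q - pmul p (pD q) - smult lam (pmul (pD p) (pD q)) \<in> I)"

text \<open>The cosets of the basis words form a K-basis of K<X;D>/I: every element is
congruent modulo I to a unique K-combination of basis words.\<close>

definition is_quotient_basis :: "'x set \<Rightarrow> ('x, 'k::comm_ring_1) opoly set \<Rightarrow> 'x letter list set \<Rightarrow> bool" where
  "is_quotient_basis X I B \<longleftrightarrow>
     (\<forall>p\<in>KXD X. \<exists>!q. Poly_Mapping.keys q \<subseteq> B \<and> p - q \<in> I)"

text \<open>A homomorphism of lambda-differential algebras K<X;D>/I \<rightarrow> R, presented as a
map on K<X;D> vanishing on I, extending f on X.\<close>

definition quot_hom_ext ::
  "'x set \<Rightarrow> ('x, 'k::comm_ring_1) opoly set \<Rightarrow> ('k \<Rightarrow> 'r::ring \<Rightarrow> 'r) \<Rightarrow> ('r \<Rightarrow> 'r)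
    \<Rightarrow> ('x \<Rightarrow> 'r) \<Rightarrow> (('x, 'k) opoly \<Rightarrow> 'r) \<Rightarrow> bool" where
  "quot_hom_ext X I sc Dr f \<phi> \<longleftrightarrow>
     (\<forall>p\<in>KXD X. \<forall>q\<in>KXD X. \<phi> (p + q) = \<phi> p + \<phi> q) \<and>
     (\<forall>c. \<forall>p\<in>KXD X. \<phi> (smult c p) = sc c (\<phi> p)) \<and>
     (\<forall>p\<in>KXD X. \<forall>q\<in>KXD X. \<phi> (pmul p q) = \<phi> p * \<phi> q) \<and>
     (\<forall>p\<in>KXD X. \<phi> (pD p) = Dr (\<phi> p)) \<and>
     (\<forall>a\<in>I. \<phi> a = 0) \<and>
     (\<forall>x\<in>X. \<phi> (wd [V x]) = f x)"

end

theory Submission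
  imports Defs
begin


instantiation list :: (type) monoid_add
begin
definition plus_list :: "'a list \<Rightarrow> 'a list \<Rightarrow> 'a list" where "plus_list = (@)"
definition zero_list :: "'a list" where "zero_list = []"
instance by standard (auto simp: plus_list_def zero_list_def)
end

lemma plus_list_app[simp]: "(u::'a list) + v = u @ v" by (simp add: plus_list_def)
lemma zero_list_nil[simp]: "(0::'a list) = []" by (simp add: zero_list_def)

lemma pm_expand: "(p::'a \<Rightarrow>\<^sub>0 'b::comm_monoid_add) = (\<Sum>u\<in>Poly_Mapping.keys p. Poly_Mapping.single u (Poly_Mapping.lookup p u))"
proof (rule poly_mapping_eqI)
  fix k
  show "Poly_Mapping.lookup p k = Poly_Mapping.lookup (\<Sum>u\<in>Poly_Mapping.keys p. Poly_Mapping.single u (Poly_Mapping.lookup p u)) k"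
    by (simp add: lookup_sum lookup_single when_def in_keys_iff)
qed

lemma pmul_eq: "pmul p q = p * q"
proof -
  have "p * q = (\<Sum>u\<in>Poly_Mapping.keys p. Poly_Mapping.single u (Poly_Mapping.lookup p u)) *
     (\<Sum>v\<in>Poly_Mapping.keys q. Poly_Mapping.single v (Poly_Mapping.lookup q v))"
    using pm_expand[of p] pm_expand[of q] by simp
  also have "\<dots> = (\<Sum>u\<in>Poly_Mapping.keys p. \<Sum>v\<in>Poly_Mapping.keys q. Poly_Mapping.single (u @ v) (Poly_Mapping.lookup p u * Poly_Mapping.lookup q v))"
    by (simp add: sum_product mult_single)
  also have "\<dots> = pmul p q"
    unfolding pmul_def by (simp add: sum.cartesian_product)
  finally show ?thesis by simp
qed

lemma smult_eq: "smult c p = Poly_Mapping.single [] c * p"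
  unfolding smult_def using mult_map_scale_conv_mult[of c p] by simp

abbreviation lk where "lk \<equiv> Poly_Mapping.lookup"
abbreviation ks where "ks \<equiv> Poly_Mapping.keys"
abbreviation sg where "sg \<equiv> Poly_Mapping.single"

lemma sg_nil_one[simp]: "(sg [] 1 :: 'x list \<Rightarrow>\<^sub>0 'a::semiring_1) = 1"
  by (metis single_one zero_list_nil)

lemma wd_eq: "wd u = sg u 1" by (simp add: wd_def)

lemma sg_scal: "sg u (c::'k::comm_ring_1) = sg [] c * wd u"
  by (simp add: wd_def mult_single)

lemma wd_app: "wd (u @ v) = (wd u * wd v :: ('x,'k::comm_ring_1) opoly)"
  by (simp add: wd_def mult_single)

lemma sc0_comm: "sg [] c * (p::('x,'k::comm_ring_1) opoly) = p * sg [] c"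
proof -
  have "sg [] c * p = (\<Sum>u\<in>ks p. sg [] c * sg u (lk p u))"
    by (subst pm_expand[of p]) (simp add: sum_distrib_left)
  also have "\<dots> = (\<Sum>u\<in>ks p. sg u (lk p u) * sg [] c)"
    by (simp add: mult_single mult.commute)
  also have "\<dots> = p * sg [] c"
    by (subst (2) pm_expand[of p]) (simp add: sum_distrib_right)
  finally show ?thesis .
qed

lemma sc0_left: "x * (sg [] c * (y::('x,'k::comm_ring_1) opoly)) = sg [] c * (x * y)"
proof -
  have "x * (sg [] c * y) = (x * sg [] c) * y" by (simp add: mult.assoc)
  also have "\<dots> = (sg [] c * x) * y" by (simp only: sc0_comm)
  finally show ?thesis by (simp add: mult.assoc)
qed
lemma sc0_right: "x * sg [] c = sg [] c * (x::('x,'k::comm_ring_1) opoly)"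
  by (rule sc0_comm[symmetric])
lemma sc0_sc0: "sg [] a * (sg [] b * (x::('x,'k::comm_ring_1) opoly)) = sg [] (a*b) * x"
  by (simp add: mult_single mult.assoc[symmetric])

lemma lookup_smult: "lk (smult c p) u = c * lk p u"
  by (simp add: smult_def Poly_Mapping.map.rep_eq when_def)

lemma keys_mult_sub: "ks ((p::('x,'k::comm_ring_1) opoly) * q) \<subseteq> {u @ v | u v. u \<in> ks p \<and> v \<in> ks q}"
proof -
  have "ks (pmul p q) \<subseteq> {u @ v | u v. u \<in> ks p \<and> v \<in> ks q}"
    unfolding pmul_def by (rule order_trans[OF keys_sum]) (auto split: if_splits simp: case_prod_beta; blast)
  then show ?thesis by (simp add: pmul_eq)
qed

lemma opwords_app: "u \<in> opwords X \<Longrightarrow> v \<in> opwords X \<Longrightarrow> u @ v \<in> opwords X"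
  by (auto simp: opwords_def)

lemma KXD_mult: "p \<in> KXD X \<Longrightarrow> q \<in> KXD X \<Longrightarrow> p * q \<in> KXD X"
  unfolding KXD_def using keys_mult_sub[of p q] opwords_app by blast

lemma KXD_add: "p \<in> KXD X \<Longrightarrow> q \<in> KXD X \<Longrightarrow> p + q \<in> KXD X"
  unfolding KXD_def using keys_add[of p q] by blast

lemma KXD_diff: "p \<in> KXD X \<Longrightarrow> q \<in> KXD X \<Longrightarrow> p - q \<in> KXD X"
  unfolding KXD_def using keys_diff[of p q] by blast

lemma KXD_0[simp]: "0 \<in> KXD X" by (simp add: KXD_def)

lemma KXD_sum: "(\<And>i. i \<in> A \<Longrightarrow> f i \<in> KXD X) \<Longrightarrow> sum f A \<in> KXD X"
  by (induction A rule: infinite_finite_induct) (auto intro: KXD_add)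

lemma keys_sc0: "ks (sg [] c * (p::('x,'k::comm_ring_1) opoly)) \<subseteq> ks p"
  using keys_mult_sub[of "sg [] c" p] by (auto split: if_splits)

lemma KXD_sc0: "p \<in> KXD X \<Longrightarrow> sg [] c * p \<in> KXD X"
  unfolding KXD_def using keys_sc0 by blast

lemma KXD_smult: "p \<in> KXD X \<Longrightarrow> smult c p \<in> KXD X"
  by (simp add: smult_eq KXD_sc0)

lemma KXD_wd: "w \<in> opwords X \<Longrightarrow> (wd w :: ('x,'k::comm_ring_1) opoly) \<in> KXD X"
  by (simp add: KXD_def wd_def)

lemma KXD_sg: "w \<in> opwords X \<Longrightarrow> (sg w c :: ('x,'k::comm_ring_1) opoly) \<in> KXD X"
  by (simp add: KXD_def)

lemma keys_pD: "ks (pD p) \<subseteq> {[Dl u] | u. u \<in> ks p}"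
  unfolding pD_def by (rule order_trans[OF keys_sum]) (auto split: if_splits)

lemma opwords_Dl: "u \<in> opwords X \<Longrightarrow> [Dl u] \<in> opwords X"
  by (simp add: opwords_def)

lemma KXD_pD: "p \<in> KXD X \<Longrightarrow> pD p \<in> KXD X"
proof -
  assume "p \<in> KXD X"
  then have "ks p \<subseteq> opwords X" by (simp add: KXD_def)
  then show ?thesis using keys_pD[of p] opwords_Dl unfolding KXD_def by fastforce
qed

lemma pm_expand_wd: "(p::('x,'k::comm_ring_1) opoly) = (\<Sum>u\<in>ks p. sg [] (lk p u) * wd u)"
proof -
  have "p = (\<Sum>u\<in>ks p. sg u (lk p u))" by (rule pm_expand)
  also have "\<dots> = (\<Sum>u\<in>ks p. sg [] (lk p u) * wd u)" by (intro sum.cong refl sg_scal)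
  finally show ?thesis .
qed

lemma keys_induct[consumes 1, case_names zero single add]:
  assumes "ks p \<subseteq> S" "P 0" "\<And>u c. u \<in> S \<Longrightarrow> P (sg u c)"
    "\<And>a b. ks a \<subseteq> S \<Longrightarrow> ks b \<subseteq> S \<Longrightarrow> P a \<Longrightarrow> P b \<Longrightarrow> P (a + b)"
  shows "P (p::'a \<Rightarrow>\<^sub>0 'b::comm_monoid_add)"
proof -
  have "ks (\<Sum>u\<in>A. sg u (lk p u)) \<subseteq> S \<and> P (\<Sum>u\<in>A. sg u (lk p u))" if "A \<subseteq> ks p" for A
  proof -
    have "finite A" by (rule finite_subset[OF that finite_keys])
    then show ?thesis using that
    proof (induction A rule: finite_induct)
      case empty then show ?case using assms(2) by simp
    next
      case (insert x F)
      have xS: "x \<in> S" using insert.prems assms(1) by blast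
      have k: "ks (sg x (lk p x)) \<subseteq> S" using xS by simp
      have IH: "ks (\<Sum>u\<in>F. sg u (lk p u)) \<subseteq> S" "P (\<Sum>u\<in>F. sg u (lk p u))"
        using insert.IH insert.prems by auto
      have e: "(\<Sum>u\<in>insert x F. sg u (lk p u)) = sg x (lk p x) + (\<Sum>u\<in>F. sg u (lk p u))"
        using insert.hyps by simp
      have "ks (sg x (lk p x) + (\<Sum>u\<in>F. sg u (lk p u))) \<subseteq> S"
        using keys_add[of "sg x (lk p x)" "\<Sum>u\<in>F. sg u (lk p u)"] k IH(1) by blast
      moreover have "P (sg x (lk p x) + (\<Sum>u\<in>F. sg u (lk p u)))"
        using assms(4)[OF k IH(1) assms(3)[OF xS] IH(2)] .
      ultimately show ?case unfolding e by blast
    qed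
  qed
  from this[of "ks p"] have "P (\<Sum>u\<in>ks p. sg u (lk p u))" by simp
  moreover have "(\<Sum>u\<in>ks p. sg u (lk p u)) = p" by (rule pm_expand[symmetric])
  ultimately show ?thesis by simp
qed




locale kmod =
  fixes sc :: "'k::comm_ring_1 \<Rightarrow> 'r::ab_group_add \<Rightarrow> 'r"
  assumes sc_addr: "sc a (x + y) = sc a x + sc a y"
    and sc_addl: "sc (a + b) x = sc a x + sc b x"
    and sc_mult: "sc (a * b) x = sc a (sc b x)"
begin

lemma sc_0[simp]: "sc 0 x = 0"
  using sc_addl[of 0 0 x] by simp
lemma sc_0r[simp]: "sc a 0 = 0"
  using sc_addr[of a 0 0] by simp
lemma sc_minus: "sc a (- x) = - sc a x"
proof -
  have "sc a x + sc a (-x) = sc a (x + -x)" by (rule sc_addr[symmetric])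
  also have "\<dots> = 0" by simp
  finally have "sc a x + sc a (-x) = 0" .
  then show ?thesis by (metis neg_eq_iff_add_eq_0)
qed
lemma sc_diff: "sc a (x - y) = sc a x - sc a y"
proof -
  have "sc a (x - y) = sc a (x + -y)" by (simp only: diff_conv_add_uminus)
  also have "\<dots> = sc a x + sc a (-y)" by (rule sc_addr)
  finally show ?thesis by (simp add: sc_minus)
qed
lemma sc_sum: "sc a (sum f A) = (\<Sum>i\<in>A. sc a (f i))"
  by (induction A rule: infinite_finite_induct) (auto simp: sc_addr)

definition lin :: "('w \<Rightarrow> 'r) \<Rightarrow> ('w \<Rightarrow>\<^sub>0 'k) \<Rightarrow> 'r" where
  "lin g p = (\<Sum>u\<in>ks p. sc (lk p u) (g u))"

lemma lin_super: "finite A \<Longrightarrow> ks p \<subseteq> A \<Longrightarrow> lin g p = (\<Sum>u\<in>A. sc (lk p u) (g u))"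
  unfolding lin_def by (rule sum.mono_neutral_left) (auto simp: in_keys_iff)

lemma lin_add: "lin g (p + q) = lin g p + lin g q"
proof -
  let ?A = "ks p \<union> ks q"
  have f: "finite ?A" by simp
  have "lin g (p + q) = (\<Sum>u\<in>?A. sc (lk (p+q) u) (g u))"
    using keys_add[of p q] by (intro lin_super f) auto
  also have "\<dots> = (\<Sum>u\<in>?A. sc (lk p u) (g u)) + (\<Sum>u\<in>?A. sc (lk q u) (g u))"
    by (simp add: lookup_add sc_addl sum.distrib)
  also have "\<dots> = lin g p + lin g q"
    by (subst (1 2) lin_super[OF f]) auto
  finally show ?thesis .
qed

lemma lin_0[simp]: "lin g 0 = 0" by (simp add: lin_def)

lemma lin_minus: "lin g (- p) = - lin g p"
proof -
  have "lin g p + lin g (-p) = 0" using lin_add[of g p "-p"] by simp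
  then show ?thesis by (metis neg_eq_iff_add_eq_0)
qed

lemma lin_diff: "lin g (p - q) = lin g p - lin g q"
proof -
  have "lin g (p - q) = lin g (p + -q)" by (simp only: diff_conv_add_uminus)
  also have "\<dots> = lin g p + lin g (-q)" by (rule lin_add)
  finally show ?thesis by (simp add: lin_minus)
qed

lemma lin_sum: "lin g (sum f A) = (\<Sum>i\<in>A. lin g (f i))"
  by (induction A rule: infinite_finite_induct) (auto simp: lin_add)

lemma lin_single: "lin g (sg w c) = sc c (g w)"
  by (subst lin_super[of "{w}"]) auto

lemma lin_smult: "lin g (smult c p) = sc c (lin g p)"
proof -
  have "ks (smult c p) \<subseteq> ks p" by (auto simp: in_keys_iff lookup_smult)
  then have "lin g (smult c p) = (\<Sum>u\<in>ks p. sc (lk (smult c p) u) (g u))"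
    by (intro lin_super) auto
  also have "\<dots> = sc c (lin g p)"
    by (simp add: lookup_smult sc_mult lin_def sc_sum)
  finally show ?thesis .
qed

lemma lin_cong: "(\<And>u. u \<in> ks p \<Longrightarrow> g u = h u) \<Longrightarrow> lin g p = lin h p"
  by (simp add: lin_def)

end




fun evl :: "('r::ring \<Rightarrow> 'r) \<Rightarrow> ('x \<Rightarrow> 'r) \<Rightarrow> 'x letter \<Rightarrow> 'r"
and evw :: "('r::ring \<Rightarrow> 'r) \<Rightarrow> ('x \<Rightarrow> 'r) \<Rightarrow> 'x letter list \<Rightarrow> 'r" where
  "evl Dr f (V x) = f x"
| "evl Dr f (Dl w) = Dr (evw Dr f w)"
| "evw Dr f [] = 0"
| "evw Dr f [l] = evl Dr f l"
| "evw Dr f (l # l' # ls) = evl Dr f l * evw Dr f (l' # ls)"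

fun evSl :: "('r::ring \<Rightarrow> 'r) \<Rightarrow> ('x \<Rightarrow> 'r) \<Rightarrow> 'r \<Rightarrow> 'x option letter \<Rightarrow> 'r"
and evSw :: "('r::ring \<Rightarrow> 'r) \<Rightarrow> ('x \<Rightarrow> 'r) \<Rightarrow> 'r \<Rightarrow> 'x option letter list \<Rightarrow> 'r" where
  "evSl Dr f t (V None) = t"
| "evSl Dr f t (V (Some x)) = f x"
| "evSl Dr f t (Dl w) = Dr (evSw Dr f t w)"
| "evSw Dr f t [] = 0"
| "evSw Dr f t [l] = evSl Dr f t l"
| "evSw Dr f t (l # l' # ls) = evSl Dr f t l * evSw Dr f t (l' # ls)"

lemma evw_Cons: "ls \<noteq> [] \<Longrightarrow> evw Dr f (l # ls) = evl Dr f l * evw Dr f ls"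
  by (cases ls) auto

lemma evw_app: "u \<noteq> [] \<Longrightarrow> v \<noteq> [] \<Longrightarrow> evw Dr f (u @ v) = evw Dr f u * evw Dr f v"
proof (induction u)
  case Nil then show ?case by simp
next
  case (Cons a u)
  show ?case
  proof (cases "u = []")
    case True then show ?thesis using Cons.prems by (simp add: evw_Cons)
  next
    case False
    then show ?thesis using Cons by (simp add: evw_Cons mult.assoc)
  qed
qed

lemma subst_w_Cons: "ls \<noteq> [] \<Longrightarrow> subst_w (l # ls) s = subst_l l s * subst_w ls s"
  by (cases ls) (auto simp: pmul_eq)

lemma evSw_Cons: "ls \<noteq> [] \<Longrightarrow> evSw Dr f t (l # ls) = evSl Dr f t l * evSw Dr f t ls"
  by (cases ls) auto

lemma evS_zero:
  "nstar_l l = 1 \<Longrightarrow> evSl Dr f 0 l = 0"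
  "nstar_w w = 1 \<Longrightarrow> evSw Dr f 0 w = (0::'r::ring)" if "Dr 0 = 0"
proof (induction l and w rule: nstar_l_nstar_w.induct)
  case (5 l ls)
  show ?case
  proof (cases "ls = []")
    case True then show ?thesis using 5 by simp
  next
    case False
    have "nstar_l l + nstar_w ls = 1" using "5.prems" by simp
    then have "nstar_l l = 1 \<or> nstar_w ls = 1" by arith
    then show ?thesis using 5 False by (auto simp: evSw_Cons)
  qed
qed (auto simp: that)

lemma subst_KXD:
  shows "s \<in> KXD X \<Longrightarrow> wfl (insert None (Some ` X)) l \<Longrightarrow> subst_l l s \<in> KXD X"
    and "s \<in> KXD X \<Longrightarrow> w \<noteq> [] \<Longrightarrow> (\<forall>l\<in>set w. wfl (insert None (Some ` X)) l) \<Longrightarrow> subst_w w s \<in> KXD X"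
proof (induction l s and w s rule: subst_l_subst_w.induct)
  case (1 s) then show ?case by simp
next
  case (2 x s) then show ?case by (auto intro!: KXD_wd simp: opwords_def)
next
  case (3 w s) then show ?case by (auto intro!: KXD_pD)
next
  case (6 l l' ls s) then show ?case by (auto simp: pmul_eq intro!: KXD_mult)
qed auto

lemma pD_wd: "pD (wd w :: ('x,'k::comm_ring_1) opoly) = wd [Dl w]"
  by (simp add: pD_def wd_def)

lemma sg_smult: "sg u c = smult c (wd u :: ('x,'k::comm_ring_1) opoly)"
  by (simp add: smult_eq sg_scal[of u c])

lemma qhe:
  assumes "quot_hom_ext X I sc Dr f \<psi>"
  shows "p \<in> KXD X \<Longrightarrow> q \<in> KXD X \<Longrightarrow> \<psi> (p + q) = \<psi> p + \<psi> q"
    and "p \<in> KXD X \<Longrightarrow> \<psi> (smult c p) = sc c (\<psi> p)"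
    and "p \<in> KXD X \<Longrightarrow> q \<in> KXD X \<Longrightarrow> \<psi> (p * q) = \<psi> p * \<psi> q"
    and "p \<in> KXD X \<Longrightarrow> \<psi> (pD p) = Dr (\<psi> p)"
    and "a \<in> I \<Longrightarrow> \<psi> a = 0"
    and "x \<in> X \<Longrightarrow> \<psi> (wd [V x]) = f x"
  using assms unfolding quot_hom_ext_def pmul_eq by auto

locale ldiff =
  fixes sc :: "'k::comm_ring_1 \<Rightarrow> 'r::ring \<Rightarrow> 'r" and Dr :: "'r \<Rightarrow> 'r" and lam :: 'k
  assumes ld: "lambda_diff_alg sc Dr lam"
begin

sublocale kmod sc
  using ld by unfold_locales (auto simp: lambda_diff_alg_def)

lemma sc_mul_l: "sc a (x * y) = sc a x * y" using ld by (simp add: lambda_diff_alg_def)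
lemma sc_mul_r: "sc a (x * y) = x * sc a y" using ld unfolding lambda_diff_alg_def by blast
lemma sc_one[simp]: "sc 1 x = x" using ld by (simp add: lambda_diff_alg_def)
lemma Dr_add: "Dr (x + y) = Dr x + Dr y" using ld by (simp add: lambda_diff_alg_def)
lemma Dr_sc: "Dr (sc a x) = sc a (Dr x)" using ld by (simp add: lambda_diff_alg_def)
lemma leib: "Dr (x * y) = Dr x * y + x * Dr y + sc lam (Dr x * Dr y)"
  using ld by (simp add: lambda_diff_alg_def)
lemma Dr_0[simp]: "Dr 0 = 0" using Dr_add[of 0 0] by simp
lemma Dr_sum: "Dr (sum f A) = (\<Sum>i\<in>A. Dr (f i))"
  by (induction A rule: infinite_finite_induct) (auto simp: Dr_add)

lemma sc_mul_both: "sc (a * b) (x * y) = sc a x * sc b y"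
proof -
  have "sc (a * b) (x * y) = sc a (sc b (x * y))" by (rule sc_mult)
  also have "sc b (x * y) = x * sc b y" by (rule sc_mul_r)
  finally show ?thesis by (simp only: sc_mul_l)
qed

definition phi :: "('x \<Rightarrow> 'r) \<Rightarrow> ('x, 'k) opoly \<Rightarrow> 'r" where
  "phi f p = lin (evw Dr f) p"

lemma phi_add: "phi f (p + q) = phi f p + phi f q" by (simp add: phi_def lin_add)
lemma phi_diff: "phi f (p - q) = phi f p - phi f q" by (simp add: phi_def lin_diff)
lemma phi_smult: "phi f (smult c p) = sc c (phi f p)" by (simp add: phi_def lin_smult)
lemma phi_wd: "phi f (wd w) = evw Dr f w" by (simp add: phi_def wd_def lin_single)
lemma phi_sum: "phi f (sum g A) = (\<Sum>i\<in>A. phi f (g i))" by (simp add: phi_def lin_sum)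

lemma phi_mult:
  assumes "p \<in> KXD X" "q \<in> KXD X"
  shows "phi f (p * q) = phi f p * phi f q"
proof -
  have ne: "u \<noteq> []" if "u \<in> ks p \<union> ks q" for u
    using that assms by (auto simp: KXD_def opwords_def)
  have "phi f (p * q) = phi f (pmul p q)" by (simp add: pmul_eq)
  also have "\<dots> = (\<Sum>(u,v)\<in>ks p \<times> ks q. sc (lk p u * lk q v) (evw Dr f (u @ v)))"
    unfolding pmul_def phi_sum by (intro sum.cong refl) (auto simp: phi_def lin_single)
  also have "\<dots> = (\<Sum>(u,v)\<in>ks p \<times> ks q. sc (lk p u) (evw Dr f u) * sc (lk q v) (evw Dr f v))"
    by (intro sum.cong refl) (auto simp: evw_app ne sc_mul_both)
  also have "\<dots> = phi f p * phi f q"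
    by (simp add: phi_def lin_def sum_product sum.cartesian_product)
  finally show ?thesis .
qed

lemma phi_pD: "phi f (pD p) = Dr (phi f p)"
proof -
  have "phi f (pD p) = (\<Sum>u\<in>ks p. sc (lk p u) (Dr (evw Dr f u)))"
    unfolding pD_def phi_sum by (intro sum.cong refl) (auto simp: phi_def lin_single)
  also have "\<dots> = Dr (phi f p)"
    by (simp add: phi_def lin_def Dr_sum Dr_sc)
  finally show ?thesis .
qed


lemma phi_subst:
  shows "s \<in> KXD X \<Longrightarrow> wfl (insert None (Some ` X)) l \<Longrightarrow> phi f (subst_l l s) = evSl Dr f (phi f s) l"
    and "s \<in> KXD X \<Longrightarrow> w \<noteq> [] \<Longrightarrow> (\<forall>l\<in>set w. wfl (insert None (Some ` X)) l) \<Longrightarrow> phi f (subst_w w s) = evSw Dr f (phi f s) w"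
proof (induction l s and w s rule: subst_l_subst_w.induct)
  case (2 x s) then show ?case by (simp add: phi_wd)
next
  case (3 w s) then show ?case by (simp add: phi_pD)
next
  case (6 l l' ls s)
  have k1: "subst_l l s \<in> KXD X" using 6 subst_KXD(1)[of s X l] by auto
  have k2: "subst_w (l' # ls) s \<in> KXD X" using 6 subst_KXD(2)[of s X "l' # ls"] by auto
  show ?case using 6 by (simp add: pmul_eq phi_mult[OF k1 k2])
qed auto

lemma Sset_phi: "s \<in> Sset X lam \<Longrightarrow> phi f s = 0"
proof -
  assume "s \<in> Sset X lam"
  then obtain x y where xy: "x \<in> opwords X" "y \<in> opwords X" and
    s: "s = pD (wd x * wd y) - pD (wd x) * wd y - wd x * pD (wd y) - smult lam (pD (wd x) * pD (wd y))"
    unfolding Sset_def by (auto simp: pmul_eq)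
  have ne: "x \<noteq> []" "y \<noteq> []" using xy by (auto simp: opwords_def)
  have k: "wd x \<in> KXD X" "wd y \<in> KXD X" "pD (wd x) \<in> KXD X" "pD (wd y) \<in> KXD X"
    using xy by (auto intro!: KXD_wd KXD_pD)
  show "phi f s = 0"
    unfolding s
    by (simp add: phi_diff phi_smult phi_mult[OF k(3) k(2)] phi_mult[OF k(1) k(4)]
        phi_mult[OF k(3) k(4)] phi_pD wd_app[symmetric] phi_wd evw_app ne leib)
qed

lemma Sset_KXD: "s \<in> Sset X lam' \<Longrightarrow> s \<in> KXD X"
  unfolding Sset_def
  by (auto simp: pmul_eq intro!: KXD_diff KXD_mult KXD_pD KXD_wd KXD_smult)

lemma phi_IdS: "a \<in> IdS X (Sset X lam) \<Longrightarrow> phi f a = 0"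
proof (induction rule: IdS.induct)
  case (gen u s)
  have sK: "s \<in> KXD X" using gen Sset_KXD by blast
  have u: "u \<noteq> []" "\<forall>l\<in>set u. wfl (insert None (Some ` X)) l" "nstar_w u = 1"
    using gen(1) by (auto simp: star_words_def opwords_def)
  show ?case using phi_subst(2)[OF sK u(1,2)] Sset_phi[OF gen(2)] evS_zero(2)[where Dr=Dr and f=f, OF Dr_0 u(3)] by simp
next
  case (add a b) then show ?case by (simp add: phi_add)
next
  case (scal a c) then show ?case by (simp add: phi_smult)
qed (simp add: phi_def)


lemma phi_hom: "quot_hom_ext X (IdS X (Sset X lam)) sc Dr f (phi f)"
  unfolding quot_hom_ext_def
  by (auto simp: pmul_eq phi_add phi_smult phi_mult phi_pD phi_IdS phi_wd)

lemma psi_word_aux: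
  assumes h: "quot_hom_ext X I sc Dr f \<psi>"
  shows "(\<forall>y\<in>set w. wfl X y \<and> \<psi> (wd [y]) = evl Dr f y) \<Longrightarrow> w \<noteq> [] \<Longrightarrow> \<psi> (wd w) = evw Dr f w"
proof (induction w)
  case Nil then show ?case by simp
next
  case (Cons a w)
  show ?case
  proof (cases "w = []")
    case True then show ?thesis using Cons by simp
  next
    case False
    have k: "wd [a] \<in> KXD X" "wd w \<in> KXD X"
      using Cons.prems False by (auto intro!: KXD_wd simp: opwords_def)
    have "\<psi> (wd (a # w)) = \<psi> (wd [a] * wd w)" by (simp flip: wd_app)
    also have "\<dots> = \<psi> (wd [a]) * \<psi> (wd w)" by (rule qhe(3)[OF h k])
    finally show ?thesis using Cons False by (simp add: evw_Cons)
  qed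
qed

lemma psi_letter:
  assumes h: "quot_hom_ext X I sc Dr f \<psi>"
  shows "wfl X l \<Longrightarrow> \<psi> (wd [l]) = evl Dr f l"
proof (induction l)
  case (V x) then show ?case using qhe(6)[OF h] by simp
next
  case (Dl w)
  have w: "w \<noteq> []" "\<forall>y\<in>set w. wfl X y" using Dl.prems by auto
  have kw: "wd w \<in> KXD X" using w by (auto intro!: KXD_wd simp: opwords_def)
  have "\<forall>y\<in>set w. wfl X y \<and> \<psi> (wd [y]) = evl Dr f y" using Dl.IH w(2) by blast
  then have "\<psi> (wd w) = evw Dr f w" by (rule psi_word_aux[OF h _ w(1)])
  moreover have "\<psi> (wd [Dl w]) = Dr (\<psi> (wd w))"
    using qhe(4)[OF h kw] by (simp add: pD_wd)
  ultimately show ?case by simp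
qed

lemma psi_word:
  assumes h: "quot_hom_ext X I sc Dr f \<psi>" "w \<in> opwords X"
  shows "\<psi> (wd w) = evw Dr f w"
proof -
  have w: "w \<noteq> []" "\<forall>y\<in>set w. wfl X y" using h(2) by (auto simp: opwords_def)
  then have "\<forall>y\<in>set w. wfl X y \<and> \<psi> (wd [y]) = evl Dr f y" using psi_letter[OF h(1)] by blast
  then show ?thesis by (rule psi_word_aux[OF h(1) _ w(1)])
qed

lemma psi_unique:
  assumes h: "quot_hom_ext X I sc Dr f \<psi>" and p: "p \<in> KXD X"
  shows "\<psi> p = phi f p"
proof -
  have hadd: "\<psi> (a + b) = \<psi> a + \<psi> b" if "a \<in> KXD X" "b \<in> KXD X" for a b
    by (rule qhe(1)[OF h that])
  have z: "\<psi> 0 = 0" using hadd[of 0 0] by simp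
  have "ks p \<subseteq> opwords X" using p by (simp add: KXD_def)
  then show ?thesis
  proof (induction p rule: keys_induct)
    case zero then show ?case by (simp add: z phi_def)
  next
    case (single u c)
    have "\<psi> (smult c (wd u)) = sc c (\<psi> (wd u))"
      by (rule qhe(2)[OF h KXD_wd[OF single]])
    then show ?case using psi_word[OF h single] by (simp add: sg_smult phi_smult phi_wd)
  next
    case (add a b)
    have "a \<in> KXD X" "b \<in> KXD X" using add.hyps by (auto simp: KXD_def)
    then show ?case using hadd add.IH by (simp add: phi_add)
  qed
qed

end




interpretation O: kmod "(\<lambda>c x. sg [] c * x) :: 'k::comm_ring_1 \<Rightarrow> ('x,'k) opoly \<Rightarrow> ('x,'k) opoly"
  by unfold_locales (auto simp: distrib_left distrib_right single_add sc0_sc0)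

lemma pD_lin: "pD p = O.lin (\<lambda>u. wd [Dl u]) p"
  unfolding pD_def O.lin_def by (intro sum.cong refl) (rule sg_scal)

lemma pD_add: "pD (p + q) = pD p + pD q" by (simp add: pD_lin O.lin_add)
lemma pD_diff: "pD (p - q) = pD p - pD q" by (simp add: pD_lin O.lin_diff)
lemma pD_sum: "pD (sum f A) = (\<Sum>i\<in>A. pD (f i))" by (simp add: pD_lin O.lin_sum)
lemma pD_sc0: "pD (sg [] c * p) = sg [] c * pD p"
  using O.lin_smult[of "\<lambda>u. wd [Dl u]" c p] by (simp add: smult_eq pD_lin)
lemma pD_0[simp]: "pD 0 = 0" by (simp add: pD_def)

lemma O_lin_wd: "O.lin t (wd w) = t w"
  by (simp add: wd_def O.lin_single)

lemma O_lin_sc0: "O.lin t (sg [] c * (p::('x,'k::comm_ring_1) opoly)) = sg [] c * (O.lin t p :: ('y,'k) opoly)"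
  using O.lin_smult[of t c p] by (simp add: smult_eq)

lemma O_lin_expand: "O.lin t p = (\<Sum>u\<in>ks p. sg [] (lk p u) * O.lin t (wd u))"
  by (simp only: O_lin_wd) (simp add: O.lin_def)

lemma sc0_prod: "(sg [] a * x) * (sg [] b * (y::('x,'k::comm_ring_1) opoly)) = sg [] (a * b) * (x * y)"
proof -
  have "(sg [] a * x) * (sg [] b * y) = sg [] a * (x * (sg [] b * y))" by (simp only: mult.assoc)
  also have "x * (sg [] b * y) = sg [] b * (x * y)" by (rule sc0_left)
  finally show ?thesis by (simp only: sc0_sc0)
qed

lemma sc0_swap: "sg [] a * (sg [] b * (x::('x,'k::comm_ring_1) opoly)) = sg [] b * (sg [] a * x)"
  by (simp only: sc0_sc0 mult.commute)

lemma prod_expand: "(\<Sum>u\<in>A. sg [] (f u) * g u) * (\<Sum>v\<in>B. sg [] (f' v) * g' v) =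
   (\<Sum>u\<in>A. \<Sum>v\<in>B. sg [] (f u * f' v) * (g u * (g' v :: ('x,'k::comm_ring_1) opoly)))"
  by (simp only: sum_product sc0_prod)

lemma mult_expand: "(p::('x,'k::comm_ring_1) opoly) * q =
   (\<Sum>u\<in>ks p. \<Sum>v\<in>ks q. sg [] (lk p u * lk q v) * (wd u * wd v))"
proof -
  have "p * q = (\<Sum>u\<in>ks p. sg [] (lk p u) * wd u) * (\<Sum>v\<in>ks q. sg [] (lk q v) * wd v)"
    using pm_expand_wd[of p] pm_expand_wd[of q] by simp
  also have "\<dots> = (\<Sum>u\<in>ks p. \<Sum>v\<in>ks q. sg [] (lk p u * lk q v) * (wd u * wd v))"
    by (rule prod_expand)
  finally show ?thesis .
qed

definition LL :: "(('x,'k::comm_ring_1) opoly \<Rightarrow> ('x,'k) opoly) \<Rightarrow> 'k \<Rightarrow> ('x,'k) opoly \<Rightarrow> ('x,'k) opoly \<Rightarrow> ('x,'k) opoly" where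
  "LL T lam p q = T (p * q) - T p * q - p * T q - sg [] lam * (T p * T q)"

lemma LL_expand:
  "LL (O.lin t) lam p q = (\<Sum>u\<in>ks p. \<Sum>v\<in>ks q. sg [] (lk p u * lk q v) * LL (O.lin t) lam (wd u) (wd v))"
proof -
  let ?T = "O.lin t"
  let ?a = "lk p" and ?b = "lk q"
  have ep: "p = (\<Sum>u\<in>ks p. sg [] (lk p u) * wd u)" by (rule pm_expand_wd)
  have eq: "q = (\<Sum>u\<in>ks q. sg [] (lk q u) * wd u)" by (rule pm_expand_wd)
  have eTp: "?T p = (\<Sum>u\<in>ks p. sg [] (lk p u) * ?T (wd u))" by (rule O_lin_expand)
  have eTq: "?T q = (\<Sum>u\<in>ks q. sg [] (lk q u) * ?T (wd u))" by (rule O_lin_expand)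
  have e1: "?T (p * q) = (\<Sum>u\<in>ks p. \<Sum>v\<in>ks q. sg [] (?a u * ?b v) * ?T (wd u * wd v))"
    by (subst mult_expand) (simp only: O.lin_sum O_lin_sc0)
  have e2: "?T p * q = (\<Sum>u\<in>ks p. \<Sum>v\<in>ks q. sg [] (?a u * ?b v) * (?T (wd u) * wd v))"
    using prod_expand[of "lk p" "\<lambda>u. ?T (wd u)" "ks p" "lk q" wd "ks q"]
    by (simp only: eTp[symmetric] eq[symmetric])
  have e3: "p * ?T q = (\<Sum>u\<in>ks p. \<Sum>v\<in>ks q. sg [] (?a u * ?b v) * (wd u * ?T (wd v)))"
    using prod_expand[of "lk p" wd "ks p" "lk q" "\<lambda>u. ?T (wd u)" "ks q"]
    by (simp only: eTq[symmetric] ep[symmetric])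
  have e4: "sg [] lam * (?T p * ?T q) = (\<Sum>u\<in>ks p. \<Sum>v\<in>ks q. sg [] (?a u * ?b v) * (sg [] lam * (?T (wd u) * ?T (wd v))))"
    using prod_expand[of "lk p" "\<lambda>u. ?T (wd u)" "ks p" "lk q" "\<lambda>u. ?T (wd u)" "ks q"]
    by (simp only: eTq[symmetric] eTp[symmetric] sum_distrib_left sc0_swap)
  have "LL ?T lam p q = (\<Sum>u\<in>ks p. \<Sum>v\<in>ks q. sg [] (?a u * ?b v) * ?T (wd u * wd v)
      - sg [] (?a u * ?b v) * (?T (wd u) * wd v) - sg [] (?a u * ?b v) * (wd u * ?T (wd v))
      - sg [] (?a u * ?b v) * (sg [] lam * (?T (wd u) * ?T (wd v))))"
    unfolding LL_def e1 e2 e3 e4 by (simp only: sum_subtractf)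
  also have "\<dots> = (\<Sum>u\<in>ks p. \<Sum>v\<in>ks q. sg [] (lk p u * lk q v) * LL (O.lin t) lam (wd u) (wd v))"
    unfolding LL_def by (simp only: right_diff_distrib)
  finally show ?thesis .
qed




lemma IdS_sc0: "a \<in> IdS X S \<Longrightarrow> sg [] c * a \<in> IdS X S"
  using IdS.scal[of a X S c] by (simp add: smult_eq)

lemma sg_m1: "(sg [] (-1) :: ('x,'k::comm_ring_1) opoly) = -1"
  by (simp add: single_uminus)

lemma IdS_minus: "a \<in> IdS X S \<Longrightarrow> - a \<in> IdS X S"
  using IdS_sc0[of a X S "-1"] by (simp add: sg_m1)

lemma IdS_diff: "a \<in> IdS X S \<Longrightarrow> b \<in> IdS X S \<Longrightarrow> a - b \<in> IdS X S"
proof -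
  assume h: "a \<in> IdS X S" "b \<in> IdS X S"
  have "a + - b \<in> IdS X S" by (rule IdS.add[OF h(1) IdS_minus[OF h(2)]])
  then show ?thesis by (simp only: diff_conv_add_uminus)
qed

lemma IdS_sum: "(\<And>i. i \<in> A \<Longrightarrow> f i \<in> IdS X S) \<Longrightarrow> sum f A \<in> IdS X S"
  by (induction A rule: infinite_finite_induct) (auto intro: IdS.add IdS.zero)

lemma star_wordsD: "u \<in> star_words X \<Longrightarrow> u \<noteq> [] \<and> (\<forall>l\<in>set u. wfl (insert None (Some ` X)) l) \<and> nstar_w u = 1"
  by (simp add: star_words_def opwords_def)

lemma star_wordsI: "u \<noteq> [] \<Longrightarrow> (\<forall>l\<in>set u. wfl (insert None (Some ` X)) l) \<Longrightarrow> nstar_w u = 1 \<Longrightarrow> u \<in> star_words X"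
  by (simp add: star_words_def opwords_def)

lemma IdS_KXD: "a \<in> IdS X S \<Longrightarrow> (\<forall>s\<in>S. s \<in> KXD X) \<Longrightarrow> a \<in> KXD X"
proof (induction a rule: IdS.induct)
  case (gen u s)
  then show ?case using star_wordsD[OF gen(1)] subst_KXD(2)[of s X u] by auto
qed (auto intro: KXD_add KXD_smult)

lemma S_in_IdS: "s \<in> S \<Longrightarrow> s \<in> IdS X S"
  using IdS.gen[of "[V None]" X s S] by (simp add: star_words_def opwords_def)

lemma nstar_w_sum: "nstar_w w = sum_list (map nstar_l w)"
  by (induction w) auto

lemma nstar_lift: "nstar_l (map_letter Some l) = 0"
proof (induction l)
  case (Dl w)
  then show ?case by (simp add: nstar_w_sum comp_def)
qed simp

lemma wfl_lift: "wfl X l \<Longrightarrow> wfl (insert None (Some ` X)) (map_letter Some l)"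
  by (induction l) auto

lemma subst_w_app: "u \<noteq> [] \<Longrightarrow> v \<noteq> [] \<Longrightarrow> subst_w (u @ v) s = subst_w u s * subst_w v s"
proof (induction u)
  case Nil then show ?case by simp
next
  case (Cons a u)
  show ?case
  proof (cases "u = []")
    case True then show ?thesis using Cons.prems by (simp add: subst_w_Cons)
  next
    case False
    then show ?thesis using Cons by (simp add: subst_w_Cons mult.assoc)
  qed
qed

lemma subst_lift_aux:
  "(\<forall>y\<in>set w. subst_l (map_letter Some y) s = wd [y]) \<Longrightarrow> w \<noteq> [] \<Longrightarrow>
     subst_w (map (map_letter Some) w) s = wd w"
proof (induction w)
  case Nil then show ?case by simp
next
  case (Cons a w)
  show ?case
  proof (cases "w = []")
    case True then show ?thesis using Cons by simp
  next
    case False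
    then show ?thesis using Cons by (simp add: subst_w_Cons flip: wd_app)
  qed
qed

lemma subst_lift: "wfl X l \<Longrightarrow> subst_l (map_letter Some l) s = wd [l]"
proof (induction l)
  case (V x) then show ?case by simp
next
  case (Dl w)
  have w: "w \<noteq> []" "\<forall>y\<in>set w. wfl X y" using Dl.prems by auto
  have "\<forall>y\<in>set w. subst_l (map_letter Some y) s = wd [y]" using Dl.IH w(2) by blast
  then have "subst_w (map (map_letter Some) w) s = wd w" by (rule subst_lift_aux[OF _ w(1)])
  then show ?case by (simp add: pD_wd)
qed

lemma subst_lift_w: "w \<in> opwords X \<Longrightarrow> subst_w (map (map_letter Some) w) s = wd w"
proof -
  assume h: "w \<in> opwords X"
  have w: "w \<noteq> []" "\<forall>y\<in>set w. wfl X y" using h by (auto simp: opwords_def)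
  then have "\<forall>y\<in>set w. subst_l (map_letter Some y) s = wd [y]" using subst_lift by blast
  then show ?thesis by (rule subst_lift_aux[OF _ w(1)])
qed

lemma star_lift_l: "w \<in> opwords X \<Longrightarrow> u \<in> star_words X \<Longrightarrow> map (map_letter Some) w @ u \<in> star_words X"
  using star_wordsD[of u X]
  by (intro star_wordsI) (auto simp: opwords_def wfl_lift nstar_w_sum comp_def nstar_lift)

lemma star_lift_r: "w \<in> opwords X \<Longrightarrow> u \<in> star_words X \<Longrightarrow> u @ map (map_letter Some) w \<in> star_words X"
  using star_wordsD[of u X]
  by (intro star_wordsI) (auto simp: opwords_def wfl_lift nstar_w_sum comp_def nstar_lift)

lemma IdS_ideal:
  "a \<in> IdS X S \<Longrightarrow> p \<in> KXD X \<Longrightarrow> p * a \<in> IdS X S \<and> a * p \<in> IdS X S"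
proof (induction a rule: IdS.induct)
  case (gen u s)
  have kp: "ks p \<subseteq> opwords X" using gen.prems by (simp add: KXD_def)
  have ne: "u \<noteq> []" using star_wordsD[OF gen(1)] by simp
  have l: "wd w * subst_w u s \<in> IdS X S" if "w \<in> opwords X" for w
  proof -
    have "wd w * subst_w u s = subst_w (map (map_letter Some) w @ u) s"
      using that ne subst_lift_w[OF that, of s] by (simp add: subst_w_app opwords_def)
    then show ?thesis using IdS.gen[OF star_lift_l[OF that gen(1)] gen(2)] by simp
  qed
  have r: "subst_w u s * wd w \<in> IdS X S" if "w \<in> opwords X" for w
  proof -
    have "subst_w u s * wd w = subst_w (u @ map (map_letter Some) w) s"
      using that ne subst_lift_w[OF that, of s] by (simp add: subst_w_app opwords_def)
    then show ?thesis using IdS.gen[OF star_lift_r[OF that gen(1)] gen(2)] by simp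
  qed
  have "p * subst_w u s = (\<Sum>w\<in>ks p. sg [] (lk p w) * (wd w * subst_w u s))"
    by (subst pm_expand_wd) (simp add: sum_distrib_right mult.assoc)
  moreover have "subst_w u s * p = (\<Sum>w\<in>ks p. sg [] (lk p w) * (subst_w u s * wd w))"
    by (subst (1) pm_expand_wd) (simp add: sum_distrib_left sc0_left)
  ultimately show ?case using l r kp
    by (auto intro!: IdS_sum IdS_sc0)
next
  case zero then show ?case by (simp add: IdS.zero)
next
  case (add a b) then show ?case by (simp add: distrib_left distrib_right IdS.add)
next
  case (scal a c) then show ?case
    by (simp add: smult_eq sc0_left mult.assoc IdS_sc0)
qed

lemma IdS_pD: "a \<in> IdS X S \<Longrightarrow> pD a \<in> IdS X S"
proof (induction a rule: IdS.induct)
  case (gen u s)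
  have "[Dl u] \<in> star_words X" using star_wordsD[OF gen(1)] by (intro star_wordsI) auto
  from IdS.gen[OF this gen(2)] show ?case by simp
next
  case (scal a c) then show ?case by (simp add: smult_eq pD_sc0 IdS_sc0)
qed (auto simp: pD_add intro: IdS.add IdS.zero)

lemma pD_eq_lin: "pD = O.lin (\<lambda>u. wd [Dl u])"
  by (rule ext) (rule pD_lin)

lemma Sset_LL: "x \<in> opwords X \<Longrightarrow> y \<in> opwords X \<Longrightarrow> LL pD lam (wd x) (wd y) \<in> Sset X lam"
  unfolding Sset_def LL_def by (auto simp: pmul_eq smult_eq)

lemma LL_pD_IdS:
  assumes "p \<in> KXD X" "q \<in> KXD X"
  shows "LL pD lam p q \<in> IdS X (Sset X lam)"
proof -
  have kp: "ks p \<subseteq> opwords X" "ks q \<subseteq> opwords X" using assms by (auto simp: KXD_def)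
  show ?thesis
    unfolding pD_eq_lin LL_expand[of _ lam p q]
    unfolding pD_eq_lin[symmetric]
    apply (rule IdS_sum, rule IdS_sum, rule IdS_sc0, rule S_in_IdS, rule Sset_LL)
    using kp by auto
qed

lemma Sset_KXD': "s \<in> Sset X lam' \<Longrightarrow> s \<in> KXD X"
  unfolding Sset_def
  by (auto simp: pmul_eq intro!: KXD_diff KXD_mult KXD_pD KXD_wd KXD_smult)

lemma quot_part:
  fixes X :: "'x set" and lam :: "'k::comm_ring_1"
  shows "quotient_is_lambda_diff X lam (IdS X (Sset X lam))"
  unfolding quotient_is_lambda_diff_def
proof (intro conjI ballI)
  show "IdS X (Sset X lam) \<subseteq> KXD X" using IdS_KXD[of _ X "Sset X lam"] Sset_KXD' by blast
next
  fix a p :: "('x,'k) opoly" assume "a \<in> IdS X (Sset X lam)" "p \<in> KXD X"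
  then show "pmul p a \<in> IdS X (Sset X lam)" "pmul a p \<in> IdS X (Sset X lam)"
    using IdS_ideal by (auto simp: pmul_eq)
next
  fix a :: "('x,'k) opoly" assume "a \<in> IdS X (Sset X lam)" then show "pD a \<in> IdS X (Sset X lam)" by (rule IdS_pD)
next
  fix p q :: "('x,'k) opoly" assume "p \<in> KXD X" "q \<in> KXD X"
  from LL_pD_IdS[OF this, of lam]
  show "pD (pmul p q) - pmul (pD p) q - pmul p (pD q) - smult lam (pmul (pD p) (pD q)) \<in> IdS X (Sset X lam)"
    by (simp add: LL_def pmul_eq smult_eq)
qed




fun Dnw :: "'k::comm_ring_1 \<Rightarrow> 'x letter list \<Rightarrow> ('x,'k) opoly" where
  "Dnw lam [] = 0"
| "Dnw lam [l] = wd [Dl [l]]"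
| "Dnw lam (l # l' # ls) = wd [Dl [l]] * wd (l' # ls) + wd [l] * Dnw lam (l' # ls)
      + sg [] lam * (wd [Dl [l]] * Dnw lam (l' # ls))"

lemma Dnw_Cons: "ls \<noteq> [] \<Longrightarrow> Dnw lam (l # ls) = wd [Dl [l]] * wd ls + wd [l] * Dnw lam ls
      + sg [] lam * (wd [Dl [l]] * Dnw lam ls)"
  by (cases ls) auto

lemma wd_Cons: "wd (a # u) = (wd [a] * wd u :: ('x,'k::comm_ring_1) opoly)"
  using wd_app[of "[a]" u] by simp

lemma wd_nil: "(wd [] :: ('x,'k::comm_ring_1) opoly) = 1" by (simp add: wd_def)

lemma ring_id:
  fixes A B L Du wu wv Dv :: "'a::ring"
  assumes c1: "\<And>z. z * L = L * z"
  shows "(A * (wu * wv) + B * (Du * wv + wu * Dv + L * (Du * Dv)) + L * (A * (Du * wv + wu * Dv + L * (Du * Dv))))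
     = (A * wu + B * Du + L * (A * Du)) * wv + (B * wu) * Dv + L * ((A * wu + B * Du + L * (A * Du)) * Dv)"
proof -
  have c2: "\<And>x y. x * (L * y) = L * (x * y)" by (metis c1 mult.assoc)
  show ?thesis by (simp add: ring_distribs mult.assoc c2[of A] c2[of B] add_ac)
qed

lemma Dnw_leib: "Dnw lam (u @ v) = Dnw lam u * wd v + wd u * Dnw lam v + sg [] lam * (Dnw lam u * Dnw lam v)"
proof (induction u)
  case Nil then show ?case by (simp add: wd_nil)
next
  case (Cons a u)
  show ?case
  proof (cases "u = []")
    case True
    then show ?thesis by (cases "v = []") (simp_all add: wd_nil Dnw_Cons)
  next
    case False
    have ne: "u @ v \<noteq> []" using False by simp
    have "Dnw lam ((a # u) @ v) = wd [Dl [a]] * (wd u * wd v) + wd [a] * Dnw lam (u @ v)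
      + sg [] lam * (wd [Dl [a]] * Dnw lam (u @ v))"
      using Dnw_Cons[OF ne, of lam a] by (simp add: wd_app)
    also have "\<dots> = (wd [Dl [a]] * wd u + wd [a] * Dnw lam u + sg [] lam * (wd [Dl [a]] * Dnw lam u)) * wd v
       + (wd [a] * wd u) * Dnw lam v
       + sg [] lam * ((wd [Dl [a]] * wd u + wd [a] * Dnw lam u + sg [] lam * (wd [Dl [a]] * Dnw lam u)) * Dnw lam v)"
      unfolding Cons.IH by (rule ring_id) (rule sc0_right)
    also have "\<dots> = Dnw lam (a # u) * wd v + wd (a # u) * Dnw lam v + sg [] lam * (Dnw lam (a # u) * Dnw lam v)"
      using Dnw_Cons[OF False, of lam a] by (simp add: wd_Cons[of a u])
    finally show ?thesis .
  qed
qed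

lemma LL_Dn_zero: "LL (O.lin (Dnw lam)) lam p (q::('x,'k::comm_ring_1) opoly) = 0"
proof -
  have "LL (O.lin (Dnw lam)) lam (wd u) (wd v :: ('x,'k) opoly) = 0" for u v
    unfolding LL_def by (simp add: O_lin_wd Dnw_leib flip: wd_app)
  then show ?thesis by (subst LL_expand) simp
qed

lemma diff3_zero: "(a::'a::ab_group_add) - b - c - d = 0 \<Longrightarrow> a = b + c + d"
  by (simp add: algebra_simps)

lemma free_ld:
  fixes lam :: "'k::comm_ring_1"
  shows "lambda_diff_alg (\<lambda>c (x :: ('x,'k) opoly). sg [] c * x) (O.lin (Dnw lam)) lam"
  unfolding lambda_diff_alg_def
proof (intro conjI allI)
  fix x y :: "('x,'k) opoly" and a b :: 'k
  show "sg [] a * (x + y) = sg [] a * x + sg [] a * y" by (rule distrib_left)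
  show "sg [] (a + b) * x = sg [] a * x + sg [] b * x" by (simp only: single_add distrib_right)
  show "sg [] (a * b) * x = sg [] a * (sg [] b * x)" by (rule sc0_sc0[symmetric])
  show "sg [] 1 * x = x" by simp
  show "sg [] a * (x * y) = sg [] a * x * y" by (simp only: mult.assoc)
  show "sg [] a * (x * y) = x * (sg [] a * y)" by (rule sc0_left[symmetric])
  show "O.lin (Dnw lam) (x + y) = O.lin (Dnw lam) x + O.lin (Dnw lam) y" by (rule O.lin_add)
  show "O.lin (Dnw lam) (sg [] a * x) = sg [] a * O.lin (Dnw lam) x" by (rule O_lin_sc0)
  show "O.lin (Dnw lam) (x * y) = O.lin (Dnw lam) x * y + x * O.lin (Dnw lam) y
      + sg [] lam * (O.lin (Dnw lam) x * O.lin (Dnw lam) y)"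
    using LL_Dn_zero[of lam x y] unfolding LL_def by (rule diff3_zero)
qed




lemma indep:
  fixes X :: "'x set" and lam :: "'k::comm_ring_1" and q :: "('x,'k) opoly"
  assumes kq: "ks q \<subseteq> basis_words X" and qI: "q \<in> IdS X (Sset X lam)"
  shows "q = 0"
proof -
  interpret L: ldiff "\<lambda>c (x::('x,'k) opoly). sg [] c * x" "O.lin (Dnw lam)" lam
    by (rule ldiff.intro, rule free_ld)
  let ?f = "\<lambda>x. wd [V x] :: ('x,'k) opoly"
  let ?Dr = "O.lin (Dnw lam)"
  have ev_l: "evl ?Dr ?f (Dpow i x) = wd [Dpow i x]" for i x
    by (induction i) (simp_all add: O_lin_wd)
  have ev_w: "(\<forall>l\<in>set b. \<exists>i x. l = Dpow i x) \<Longrightarrow> b \<noteq> [] \<Longrightarrow> evw ?Dr ?f b = wd b" for b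
  proof (induction b)
    case Nil then show ?case by simp
  next
    case (Cons a b)
    obtain i x where a: "a = Dpow i x" using Cons.prems by auto
    show ?case
    proof (cases "b = []")
      case True then show ?thesis using a ev_l by simp
    next
      case False then show ?thesis using Cons a ev_l by (simp add: evw_Cons wd_Cons[of _ b])
    qed
  qed
  have "L.phi ?f q = (\<Sum>u\<in>ks q. sg [] (lk q u) * evw ?Dr ?f u)"
    by (simp add: L.phi_def O.lin_def)
  also have "\<dots> = (\<Sum>u\<in>ks q. sg [] (lk q u) * wd u)"
  proof (intro sum.cong refl)
    fix u assume "u \<in> ks q"
    then have "u \<in> basis_words X" using kq by blast
    then show "sg [] (lk q u) * evw ?Dr ?f u = sg [] (lk q u) * wd u"
      using ev_w[of u] unfolding basis_words_def by fastforce
  qed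
  also have "\<dots> = q" by (rule pm_expand_wd[symmetric])
  finally have "L.phi ?f q = q" .
  moreover have "L.phi ?f q = 0" by (rule L.phi_IdS[OF qI])
  ultimately show ?thesis by simp
qed




definition good :: "'x set \<Rightarrow> 'k::comm_ring_1 \<Rightarrow> ('x,'k) opoly \<Rightarrow> bool" where
  "good X lam p \<longleftrightarrow> (\<exists>q. ks q \<subseteq> basis_words X \<and> p - q \<in> IdS X (Sset X lam))"

lemma wfl_Dpow: "x \<in> X \<Longrightarrow> wfl X (Dpow i x)"
  by (induction i) auto

lemma bw_opwords: "basis_words X \<subseteq> opwords X"
  unfolding basis_words_def opwords_def using wfl_Dpow by fastforce

lemma bw_app: "u \<in> basis_words X \<Longrightarrow> v \<in> basis_words X \<Longrightarrow> u @ v \<in> basis_words X"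
  unfolding basis_words_def by auto

lemma bw_KXD: "ks q \<subseteq> basis_words X \<Longrightarrow> q \<in> KXD X"
  unfolding KXD_def using bw_opwords by blast

lemma good_transfer: "good X lam p' \<Longrightarrow> p - p' \<in> IdS X (Sset X lam) \<Longrightarrow> good X lam p"
proof -
  assume "good X lam p'" and d: "p - p' \<in> IdS X (Sset X lam)"
  then obtain q where q: "ks q \<subseteq> basis_words X" "p' - q \<in> IdS X (Sset X lam)"
    unfolding good_def by blast
  have "p - q = (p - p') + (p' - q)" by simp
  then have "p - q \<in> IdS X (Sset X lam)" using IdS.add[OF d q(2)] by simp
  then show ?thesis using q(1) unfolding good_def by blast
qed

lemma good_0: "good X lam 0"
  unfolding good_def by (rule exI[of _ 0]) (simp add: IdS.zero)

lemma good_add: "good X lam p \<Longrightarrow> good X lam p' \<Longrightarrow> good X lam (p + p')"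
proof -
  assume "good X lam p" "good X lam p'"
  then obtain q q' where q: "ks q \<subseteq> basis_words X" "p - q \<in> IdS X (Sset X lam)"
    and q': "ks q' \<subseteq> basis_words X" "p' - q' \<in> IdS X (Sset X lam)"
    unfolding good_def by blast
  have e: "(p + p') - (q + q') = (p - q) + (p' - q')" by simp
  have "(p + p') - (q + q') \<in> IdS X (Sset X lam)" unfolding e by (rule IdS.add[OF q(2) q'(2)])
  moreover have "ks (q + q') \<subseteq> basis_words X" using keys_add[of q q'] q(1) q'(1) by blast
  ultimately show ?thesis unfolding good_def by blast
qed

lemma good_sc0: "good X lam p \<Longrightarrow> good X lam (sg [] c * p)"
proof -
  assume "good X lam p"
  then obtain q where q: "ks q \<subseteq> basis_words X" "p - q \<in> IdS X (Sset X lam)"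
    unfolding good_def by blast
  have "sg [] c * p - sg [] c * q = sg [] c * (p - q)" by (simp add: right_diff_distrib)
  then have "sg [] c * p - sg [] c * q \<in> IdS X (Sset X lam)" using IdS_sc0[OF q(2)] by simp
  moreover have "ks (sg [] c * q) \<subseteq> basis_words X" using keys_sc0[of c q] q(1) by blast
  ultimately show ?thesis unfolding good_def by blast
qed

lemma good_sum: "(\<And>i. i \<in> A \<Longrightarrow> good X lam (f i)) \<Longrightarrow> good X lam (sum f A)"
  by (induction A rule: infinite_finite_induct) (auto intro: good_add good_0)

lemma good_mult:
  assumes "good X lam p" "good X lam p'" "p \<in> KXD X" "p' \<in> KXD X"
  shows "good X lam (p * p')"
proof -
  obtain q q' where q: "ks q \<subseteq> basis_words X" "p - q \<in> IdS X (Sset X lam)"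
    and q': "ks q' \<subseteq> basis_words X" "p' - q' \<in> IdS X (Sset X lam)"
    using assms(1,2) unfolding good_def by blast
  have e: "p * p' - q * q' = (p - q) * p' + q * (p' - q')" by (simp add: algebra_simps)
  have "(p - q) * p' \<in> IdS X (Sset X lam)" using IdS_ideal[OF q(2) assms(4)] by blast
  moreover have "q * (p' - q') \<in> IdS X (Sset X lam)" using IdS_ideal[OF q'(2) bw_KXD[OF q(1)]] by blast
  ultimately have "p * p' - q * q' \<in> IdS X (Sset X lam)" unfolding e by (rule IdS.add)
  moreover have "ks (q * q') \<subseteq> basis_words X"
    using keys_mult_sub[of q q'] q(1) q'(1) bw_app by blast
  ultimately show ?thesis unfolding good_def by blast
qed

lemma good_bw: "b \<in> basis_words X \<Longrightarrow> good X lam (wd b)"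
  unfolding good_def by (rule exI[of _ "wd b"]) (simp add: IdS.zero wd_def)

lemma good_Dl: "b \<in> basis_words X \<Longrightarrow> good X lam (wd [Dl b])"
proof (induction "length b" arbitrary: b rule: less_induct)
  case less
  obtain l b' where b: "b = l # b'" using less.prems by (cases b) (auto simp: basis_words_def)
  obtain i x where l: "l = Dpow i x" "x \<in> X" using less.prems b by (auto simp: basis_words_def)
  have lD: "[Dl [l]] \<in> basis_words X" using l by (auto simp: basis_words_def intro!: exI[of _ "Suc i"])
  show ?case
  proof (cases "b' = []")
    case True
    then show ?thesis using good_bw[OF lD] b by simp
  next
    case False
    have b': "b' \<in> basis_words X" using less.prems b False by (auto simp: basis_words_def)
    have lb: "[l] \<in> basis_words X" using l by (auto simp: basis_words_def)
    have IH: "good X lam (wd [Dl b'])" using less.hyps[OF _ b'] b by simp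
    have k1: "wd [Dl [l]] \<in> KXD X" using lD bw_opwords by (blast intro: KXD_wd)
    have k2: "wd b' \<in> KXD X" using b' bw_opwords by (blast intro: KXD_wd)
    have k3: "wd [Dl b'] \<in> KXD X" using b' bw_opwords by (blast intro: KXD_wd opwords_Dl)
    let ?R = "wd [Dl [l]] * wd b' + wd [l] * wd [Dl b'] + sg [] lam * (wd [Dl [l]] * wd [Dl b'])"
    have k4: "wd [l] \<in> KXD X" using lb bw_opwords by (blast intro: KXD_wd)
    have gR: "good X lam ?R"
      by (intro good_add good_sc0 good_mult good_bw IH lD b' lb k1 k2 k3 k4)
    have s: "LL pD lam (wd [l]) (wd b') \<in> IdS X (Sset X lam)"
      using lb b' bw_opwords by (blast intro: S_in_IdS Sset_LL)
    have "LL pD lam (wd [l]) (wd b') = wd [Dl b] - ?R"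
      unfolding LL_def b by (simp add: pD_wd wd_Cons[of l b', symmetric] diff_diff_eq)
    then have "wd [Dl b] - ?R \<in> IdS X (Sset X lam)" using s by simp
    then show ?thesis by (rule good_transfer[OF gR])
  qed
qed


lemma good_pD: "p \<in> KXD X \<Longrightarrow> good X lam p \<Longrightarrow> good X lam (pD p)"
proof -
  assume "p \<in> KXD X" "good X lam p"
  then obtain q where q: "ks q \<subseteq> basis_words X" "p - q \<in> IdS X (Sset X lam)"
    unfolding good_def by blast
  have "pD q = (\<Sum>u\<in>ks q. sg [] (lk q u) * wd [Dl u])" by (simp add: pD_lin O.lin_def)
  moreover have "good X lam (\<Sum>u\<in>ks q. sg [] (lk q u) * wd [Dl u])"
    using q(1) by (intro good_sum good_sc0 good_Dl) blast
  ultimately have g: "good X lam (pD q)" by simp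
  have "pD p - pD q \<in> IdS X (Sset X lam)" using IdS_pD[OF q(2)] by (simp add: pD_diff)
  then show ?thesis by (rule good_transfer[OF g])
qed

lemma good_word_aux:
  "(\<forall>y\<in>set w. wfl X y \<and> good X lam (wd [y])) \<Longrightarrow> w \<noteq> [] \<Longrightarrow> good X lam (wd w)"
proof (induction w)
  case Nil then show ?case by simp
next
  case (Cons a w)
  show ?case
  proof (cases "w = []")
    case True then show ?thesis using Cons by simp
  next
    case False
    have k: "wd [a] \<in> KXD X" "wd w \<in> KXD X"
      using Cons.prems False by (auto intro!: KXD_wd simp: opwords_def)
    have "good X lam (wd [a] * wd w)"
      using Cons False by (intro good_mult k) auto
    then show ?thesis by (simp add: wd_Cons[of a w])
  qed
qed

lemma good_letter: "wfl X l \<Longrightarrow> good X lam (wd [l])"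
proof (induction l)
  case (V x)
  have "[V x] \<in> basis_words X" using V by (auto simp: basis_words_def intro!: exI[of _ 0])
  then show ?case by (rule good_bw)
next
  case (Dl w)
  have w: "w \<noteq> []" "\<forall>y\<in>set w. wfl X y" using Dl.prems by auto
  have "\<forall>y\<in>set w. wfl X y \<and> good X lam (wd [y])" using Dl.IH w(2) by blast
  then have g: "good X lam (wd w)" by (rule good_word_aux[OF _ w(1)])
  have k: "wd w \<in> KXD X" using w by (auto intro!: KXD_wd simp: opwords_def)
  show ?case using good_pD[OF k g] by (simp add: pD_wd)
qed

lemma good_KXD: "p \<in> KXD X \<Longrightarrow> good X lam p"
proof -
  assume "p \<in> KXD X"
  then have "ks p \<subseteq> opwords X" by (simp add: KXD_def)
  then show ?thesis
  proof (induction p rule: keys_induct)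
    case zero then show ?case by (rule good_0)
  next
    case (single u c)
    have w: "u \<noteq> []" "\<forall>y\<in>set u. wfl X y" using single by (auto simp: opwords_def)
    then have "\<forall>y\<in>set u. wfl X y \<and> good X lam (wd [y])" using good_letter by blast
    then have "good X lam (wd u)" by (rule good_word_aux[OF _ w(1)])
    then show ?case using good_sc0 by (simp add: sg_scal[of u c])
  next
    case (add a b) then show ?case by (rule_tac good_add) auto
  qed
qed

lemma basis_part:
  fixes X :: "'x set" and lam :: "'k::comm_ring_1"
  shows "is_quotient_basis X (IdS X (Sset X lam)) (basis_words X)"
  unfolding is_quotient_basis_def
proof
  fix p :: "('x,'k) opoly" assume "p \<in> KXD X"
  then obtain q where q: "ks q \<subseteq> basis_words X" "p - q \<in> IdS X (Sset X lam)"
    using good_KXD unfolding good_def by blast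
  show "\<exists>!q. ks q \<subseteq> basis_words X \<and> p - q \<in> IdS X (Sset X lam)"
  proof (rule ex1I[of _ q])
    show "ks q \<subseteq> basis_words X \<and> p - q \<in> IdS X (Sset X lam)" using q by blast
  next
    fix q' assume q': "ks q' \<subseteq> basis_words X \<and> p - q' \<in> IdS X (Sset X lam)"
    have e: "q - q' = (p - q') - (p - q)" by simp
    have "q - q' \<in> IdS X (Sset X lam)" unfolding e using q' q(2) by (blast intro: IdS_diff)
    moreover have "ks (q - q') \<subseteq> basis_words X" using keys_diff[of q q'] q(1) q' by blast
    ultimately have "q - q' = 0" by (intro indep)
    then show "q' = q" by simp
  qed
qed

theorem theorem5p5:
  fixes X :: "'x set" and lam :: "'k::comm_ring_1"
  shows "quotient_is_lambda_diff X lam (IdS X (Sset X lam))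
     \<and> (\<forall>(sc :: 'k \<Rightarrow> 'r::ring \<Rightarrow> 'r) Dr (f :: 'x \<Rightarrow> 'r). lambda_diff_alg sc Dr lam \<longrightarrow>
           (\<exists>\<phi>. quot_hom_ext X (IdS X (Sset X lam)) sc Dr f \<phi> \<and>
                 (\<forall>\<psi>. quot_hom_ext X (IdS X (Sset X lam)) sc Dr f \<psi> \<longrightarrow>
                        (\<forall>p\<in>KXD X. \<psi> p = \<phi> p))))
     \<and> is_quotient_basis X (IdS X (Sset X lam)) (basis_words X)"
proof (intro conjI allI impI)
  show "quotient_is_lambda_diff X lam (IdS X (Sset X lam))" by (rule quot_part)
  show "is_quotient_basis X (IdS X (Sset X lam)) (basis_words X)" by (rule basis_part)
next
  fix sc :: "'k \<Rightarrow> 'r::ring \<Rightarrow> 'r" and Dr f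
  assume ld: "lambda_diff_alg sc Dr lam"
  interpret L: ldiff sc Dr lam by (rule ldiff.intro[OF ld])
  show "\<exists>\<phi>. quot_hom_ext X (IdS X (Sset X lam)) sc Dr f \<phi> \<and>
                 (\<forall>\<psi>. quot_hom_ext X (IdS X (Sset X lam)) sc Dr f \<psi> \<longrightarrow>
                        (\<forall>p\<in>KXD X. \<psi> p = \<phi> p))"
    using L.phi_hom L.psi_unique by blast
qed



end
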